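(* Let $d$ be any positive integer and let $\mathcal{B}(d)=\{B_{j}\}_{j=1}^{J}$ be a partition of $\{1,\dots,d\}$ into consecutive blocks whose cardinalities $b_1,\dots,b_J$ satisfy \[ \max_{1\leq j \leq J-1} \frac{b_{j+1}}{b_{j}} \leq 1+\eta \] for some $\eta>0$. Then for any $\theta\in l_{2}$ and any $\varepsilon>0,\tilde\varepsilon>0$, \[ \inf_{\widehat{Q}\in\mathcal{G}_{\mathrm{BW}}(\mathcal{B}(d))} R(\theta,\widehat{Q}) \leq (1+\eta)\inf_{\widehat{Q}\in\mathcal{G}_{\mathrm{mon}}(\mathcal{B}(d))} R(\theta,\widehat{Q}) +\frac{b_{1}}{2}\log\left(\frac{v^{2}_{\varepsilon}}{v^{2}_{\varepsilon,\tilde{\varepsilon}}}\right). \]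
   Context: Model: for $\theta\in l_2$, $P_{\theta}=\bigotimes_{i\ge1}\mathcal{N}(\theta_{i},\varepsilon^{2})$ (observation $X$) and $Q_{\theta}=\bigotimes_{i\ge1}\mathcal{N}(\theta_{i},\tilde{\varepsilon}^{2})$ (future observation $Y$) on $\mathbb{R}^\infty$. Risk $R(\theta,\widehat Q)=\int l(\theta,\widehat Q(\cdot;x))\,\mathrm dP_\theta(x)$ with $l(\theta,Q)=\int\log\frac{\mathrm dQ_\theta}{\mathrm dQ}\,\mathrm dQ_\theta$ if $Q_\theta\ll Q$, else $\infty$. $v^{2}_{\varepsilon,\tilde{\varepsilon}}=1/(1/\varepsilon^{2}+1/\tilde{\varepsilon}^{2})$, $v^{2}_{\varepsilon}=\varepsilon^{2}$. For $\tau$ with $\tau_i\ge0$, $Q_{\mathrm{G}_{\tau}}(\cdot|X=x)=\bigotimes_{i}\mathcal{N}\Big(\frac{1/\varepsilon^{2}}{1/\varepsilon^{2}+1/\tau^{2}_{i}}x_{i},\ \frac{1}{1/\varepsilon^{2}+1/\tau^{2}_{i}}+\tilde{\varepsilon}^{2}\Big)$ is the Bayesian predictive distribution based on the prior $\bigotimes_i\mathcal N(0,\tau_i^2)$ (coordinates with $\tau_i=0$ give $\mathcal N(0,\tilde\varepsilon^2)$). $\mathcal{G}_{\mathrm{BW}}(\mathcal{B}(d))$ is the set of $Q_{\mathrm{G}_\tau}$ with $\tau=(\tau^{(d)},0,0,\dots)$, $\tau^{(d)}=(\tau_1,\dots,\tau_d)\in[0,\infty)^d$ constant on each block $B_j$;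 $\mathcal{G}_{\mathrm{mon}}(\mathcal{B}(d))$ is the set of $Q_{\mathrm{G}_\tau}$ with $\tau=(\tau^{(d)},0,0,\dots)$ and $\tau_1\ge\tau_2\ge\cdots\ge\tau_d\ge0$. *)

theory Defs
  imports "HOL-Probability.Probability"
begin

text \<open>Coordinates are indexed from 0 (paper index i corresponds to i+1 here).
  The sample space R^infinity is nat => real with the product sigma-algebra.\<close>

definition normal_measure :: "real \<Rightarrow> real \<Rightarrow> real measure" where
  "normal_measure m v = density lborel (normal_density m (sqrt v))"

definition gauss_seq :: "(nat \<Rightarrow> real) \<Rightarrow> (nat \<Rightarrow> real) \<Rightarrow> (nat \<Rightarrow> real) measure" where
  "gauss_seq m v = (\<Pi>\<^sub>M i\<in>UNIV. normal_measure (m i) (v i))"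

text \<open>Kullback-Leibler loss l = int log (dQtheta/dQ) dQtheta if Qtheta << Q, infinity otherwise
  (also infinity if the log-likelihood ratio is not integrable; its negative part is always
  integrable, so the integral is then +infinity).\<close>
definition kl_loss :: "'a measure \<Rightarrow> 'a measure \<Rightarrow> ennreal" where
  "kl_loss Qth Q =
     (if sets Qth = sets Q \<and> absolutely_continuous Q Qth \<and>
         integrable Qth (\<lambda>y. ln (enn2real (RN_deriv Q Qth y)))
      then ennreal (\<integral>y. ln (enn2real (RN_deriv Q Qth y)) \<partial>Qth)
      else \<infinity>)"

definition risk :: "real \<Rightarrow> real \<Rightarrow> (nat \<Rightarrow> real) \<Rightarrow> ((nat \<Rightarrow> real) \<Rightarrow> (nat \<Rightarrow> real) measure) \<Rightarrow> ennreal" where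
  "risk eps eps' \<theta> Qhat =
     (\<integral>\<^sup>+ x. kl_loss (gauss_seq \<theta> (\<lambda>_. eps'\<^sup>2)) (Qhat x) \<partial>(gauss_seq \<theta> (\<lambda>_. eps\<^sup>2)))"

text \<open>Bayesian predictive distribution Q_{G_tau}(. | X = x) for the prior prod N(0, tau_i^2).
  The mean factor (1/eps^2)/(1/eps^2+1/tau^2) and variance 1/(1/eps^2+1/tau^2) are written
  as tau^2/(tau^2+eps^2) and tau^2 eps^2/(tau^2+eps^2), which equal them for tau > 0 and give
  N(0, eps'^2) when tau = 0, as in the paper's convention.\<close>
definition pred_G :: "real \<Rightarrow> real \<Rightarrow> (nat \<Rightarrow> real) \<Rightarrow> (nat \<Rightarrow> real) \<Rightarrow> (nat \<Rightarrow> real) measure" where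
  "pred_G eps eps' \<tau> x =
     gauss_seq (\<lambda>i. (\<tau> i)\<^sup>2 / ((\<tau> i)\<^sup>2 + eps\<^sup>2) * x i)
               (\<lambda>i. (\<tau> i)\<^sup>2 * eps\<^sup>2 / ((\<tau> i)\<^sup>2 + eps\<^sup>2) + eps'\<^sup>2)"

definition block_start :: "(nat \<Rightarrow> nat) \<Rightarrow> nat \<Rightarrow> nat" where
  "block_start b j = (\<Sum>k<j. b k)"

definition block :: "(nat \<Rightarrow> nat) \<Rightarrow> nat \<Rightarrow> nat set" where
  "block b j = {block_start b j ..< block_start b (Suc j)}"

definition consecutive_partition :: "nat \<Rightarrow> (nat \<Rightarrow> nat) \<Rightarrow> nat \<Rightarrow> bool" where
  "consecutive_partition d b J \<longleftrightarrow> (\<forall>j<J. 0 < b j) \<and> (\<Sum>j<J. b j) = d"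

definition G_BW :: "real \<Rightarrow> real \<Rightarrow> nat \<Rightarrow> (nat \<Rightarrow> nat) \<Rightarrow> nat \<Rightarrow> ((nat \<Rightarrow> real) \<Rightarrow> (nat \<Rightarrow> real) measure) set" where
  "G_BW eps eps' d b J = {pred_G eps eps' \<tau> | \<tau>.
     (\<forall>i. 0 \<le> \<tau> i) \<and> (\<forall>i\<ge>d. \<tau> i = 0) \<and>
     (\<forall>j<J. \<forall>i\<in>block b j. \<forall>i'\<in>block b j. \<tau> i = \<tau> i')}"

definition G_mon :: "real \<Rightarrow> real \<Rightarrow> nat \<Rightarrow> ((nat \<Rightarrow> real) \<Rightarrow> (nat \<Rightarrow> real) measure) set" where
  "G_mon eps eps' d = {pred_G eps eps' \<tau> | \<tau>.
     (\<forall>i. 0 \<le> \<tau> i) \<and> (\<forall>i\<ge>d. \<tau> i = 0) \<and> (\<forall>i j. i \<le> j \<and> j < d \<longrightarrow> \<tau> j \<le> \<tau> i)}"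

definition v2 :: "real \<Rightarrow> real \<Rightarrow> real" where
  "v2 eps eps' = 1 / (1 / eps\<^sup>2 + 1 / eps'\<^sup>2)"

end

theory Submission
  imports Defs
begin


lemma kl_density:
  assumes Q: "prob_space Q" and f: "f \<in> borel_measurable Q" and P: "P = density Q f"
  shows "kl_loss P Q = (if integrable P (\<lambda>y. ln (enn2real (f y)))
      then ennreal (\<integral>y. ln (enn2real (f y)) \<partial>P) else \<infinity>)"
proof -
  interpret Q: prob_space Q by fact
  have sets: "sets P = sets Q" using P by simp
  have ac: "absolutely_continuous Q P" using P f absolutely_continuousI_density by blast
  have "AE y in Q. f y = RN_deriv Q P y"
    using Q.RN_deriv_unique[OF f P[symmetric]] .
  then have "AE y in P. f y = RN_deriv Q P y"
    using absolutely_continuous_AE[OF sets ac] by blast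
  then have ae: "AE y in P. ln (enn2real (RN_deriv Q P y)) = ln (enn2real (f y))"
    by eventually_elim simp
  have m1: "(\<lambda>y. ln (enn2real (RN_deriv Q P y))) \<in> borel_measurable P"
    unfolding measurable_cong_sets[OF sets refl] by measurable
  have m2: "(\<lambda>y. ln (enn2real (f y))) \<in> borel_measurable P"
    unfolding measurable_cong_sets[OF sets refl] using f by measurable
  have "integrable P (\<lambda>y. ln (enn2real (RN_deriv Q P y))) = integrable P (\<lambda>y. ln (enn2real (f y)))"
    by (rule integrable_cong_AE[OF m1 m2 ae])
  moreover have "(\<integral>y. ln (enn2real (RN_deriv Q P y)) \<partial>P) = (\<integral>y. ln (enn2real (f y)) \<partial>P)"
    by (rule integral_cong_AE[OF m1 m2 ae])
  ultimately show ?thesis unfolding kl_loss_def using sets ac by simp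
qed

lemma kl_not_ac: "\<not> absolutely_continuous Q P \<Longrightarrow> kl_loss P Q = \<infinity>"
  unfolding kl_loss_def by simp



lemma kl_density_real:
  assumes Q: "prob_space Q" and h[measurable]: "h \<in> borel_measurable Q" and nn: "\<And>y. 0 \<le> h y"
    and P: "P = density Q (\<lambda>y. ennreal (h y))"
  shows "kl_loss P Q = (if integrable P (\<lambda>y. ln (h y)) then ennreal (\<integral>y. ln (h y) \<partial>P) else \<infinity>)"
  using kl_density[OF Q _ P] nn by simp

lemma kl_neg_part:
  assumes Q: "prob_space Q" and h[measurable]: "h \<in> borel_measurable Q" and nn: "\<And>y. 0 \<le> h y"
    and P: "P = density Q (\<lambda>y. ennreal (h y))"
  shows "(\<integral>\<^sup>+y. ennreal (- ln (h y)) \<partial>P) \<le> 1"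
proof -
  interpret Q: prob_space Q by fact
  have "(\<integral>\<^sup>+y. ennreal (- ln (h y)) \<partial>P) = (\<integral>\<^sup>+y. ennreal (h y) * ennreal (- ln (h y)) \<partial>Q)"
    unfolding P by (rule nn_integral_density) auto
  also have "\<dots> \<le> (\<integral>\<^sup>+y. 1 \<partial>Q)"
  proof (rule nn_integral_mono)
    fix y
    show "ennreal (h y) * ennreal (- ln (h y)) \<le> 1"
    proof (cases "- ln (h y) \<le> 0")
      case True then have "ennreal (- ln (h y)) = 0" by (simp add: ennreal_eq_0_iff)
      then show ?thesis by simp
    next
      case False
      then have h0: "0 < h y" using nn[of y] by (cases "h y = 0") auto
      have "- ln (h y) = ln (1 / h y)" using h0 by (simp add: ln_div)
      also have "\<dots> \<le> 1 / h y - 1" using h0 by (intro ln_le_minus_one) simp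
      finally have "h y * (- ln (h y)) \<le> h y * (1 / h y - 1)"
        using h0 by (intro mult_left_mono) auto
      also have "\<dots> \<le> 1" using h0 by (simp add: field_simps)
      finally have "h y * (- ln (h y)) \<le> 1" .
      then show ?thesis using False nn[of y]
        by (subst ennreal_mult[symmetric]) (auto simp: ennreal_le_1)
    qed
  qed
  also have "\<dots> = 1" by (simp add: Q.emeasure_space_1)
  finally show ?thesis .
qed

lemma kl_nonneg_real:
  assumes Q: "prob_space Q" and h[measurable]: "h \<in> borel_measurable Q" and nn: "\<And>y. 0 \<le> h y"
    and P: "P = density Q (\<lambda>y. ennreal (h y))" and PP: "prob_space P"
    and int: "integrable P (\<lambda>y. ln (h y))"
  shows "0 \<le> (\<integral>y. ln (h y) \<partial>P)"
proof -
  interpret Q: prob_space Q by fact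
  interpret I: information_space Q "exp 1" by standard simp
  have lg: "log (exp 1) x = ln x" for x by (simp add: log_def)
  have int2: "integrable Q (\<lambda>x. h x * log (exp 1) (h x))"
    using int unfolding P lg by (subst (asm) integrable_density) (auto simp: nn)
  have "0 \<le> KL_divergence (exp 1) Q (density Q h)"
    by (rule I.KL_nonneg) (use PP P nn int2 in auto)
  also have "KL_divergence (exp 1) Q (density Q h) = (\<integral>x. h x * log (exp 1) (h x) \<partial>Q)"
    by (rule Q.KL_density) (auto simp: nn)
  also have "\<dots> = (\<integral>y. ln (h y) \<partial>P)"
    unfolding P lg by (subst integral_density) (auto simp: nn)
  finally show ?thesis .
qed



lemma distr_pair_snd': assumes "prob_space N" "prob_space M" shows "distr (N \<Otimes>\<^sub>M M) M snd = M"
proof (intro measure_eqI)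
  interpret N: prob_space N by fact
  interpret M: prob_space M by fact
  fix A assume A: "A \<in> sets (distr (N \<Otimes>\<^sub>M M) M snd)"
  from A have "emeasure (distr (N \<Otimes>\<^sub>M M) M snd) A = emeasure (N \<Otimes>\<^sub>M M) (space N \<times> A)"
    by (auto simp add: emeasure_distr space_pair_measure dest: sets.sets_into_space intro!: arg_cong2[where f=emeasure])
  with A show "emeasure (distr (N \<Otimes>\<^sub>M M) M snd) A = emeasure M A"
    by (simp add: M.emeasure_pair_measure_Times N.emeasure_space_1)
qed simp

lemma exists_real_density:
  assumes Q: "prob_space Q" and P: "prob_space P" and sets: "sets P = sets Q"
    and ac: "absolutely_continuous Q P"
  obtains h where "h \<in> borel_measurable Q" "\<And>y. 0 \<le> h y" "P = density Q (\<lambda>y. ennreal (h y))"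
proof -
  interpret Q: prob_space Q by fact
  interpret P: prob_space P by fact
  obtain D where D: "D \<in> borel_measurable Q" "AE x in Q. RN_deriv Q P x = ennreal (D x)"
    "\<And>x. 0 \<le> D x"
    using Q.real_RN_deriv[OF _ ac sets] P.finite_measure_axioms by metis
  have "P = density Q (RN_deriv Q P)" using Q.density_RN_deriv[OF ac sets] by simp
  also have "\<dots> = density Q (\<lambda>y. ennreal (D y))"
    using D by (intro density_cong) auto
  finally show ?thesis using that D by blast
qed

lemma ac_pair_fst:
  assumes "prob_space Q1" "prob_space Q2" "prob_space P1" "prob_space P2"
    and "sets P1 = sets Q1" "sets P2 = sets Q2"
    and ac: "absolutely_continuous (Q1 \<Otimes>\<^sub>M Q2) (P1 \<Otimes>\<^sub>M P2)"
  shows "absolutely_continuous Q1 P1" "absolutely_continuous Q2 P2"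
proof -
  interpret Q1: prob_space Q1 by fact
  interpret Q2: prob_space Q2 by fact
  interpret P1: prob_space P1 by fact
  interpret P2: prob_space P2 by fact
  have s1: "space P1 = space Q1" "space P2 = space Q2"
    using assms(5,6) sets_eq_imp_space_eq by blast+
  show "absolutely_continuous Q1 P1"
    unfolding absolutely_continuous_def
  proof
    fix A assume A: "A \<in> null_sets Q1"
    then have "A \<times> space Q2 \<in> null_sets (Q1 \<Otimes>\<^sub>M Q2)"
      by (simp add: null_sets_def Q2.emeasure_pair_measure_Times)
    then have "A \<times> space P2 \<in> null_sets (P1 \<Otimes>\<^sub>M P2)"
      using ac s1 unfolding absolutely_continuous_def by auto
    then show "A \<in> null_sets P1"
      using A assms(5) by (simp add: null_sets_def P2.emeasure_pair_measure_Times P2.emeasure_space_1)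
  qed
  show "absolutely_continuous Q2 P2"
    unfolding absolutely_continuous_def
  proof
    fix A assume A: "A \<in> null_sets Q2"
    then have "space Q1 \<times> A \<in> null_sets (Q1 \<Otimes>\<^sub>M Q2)"
      by (simp add: null_sets_def Q2.emeasure_pair_measure_Times)
    then have "space P1 \<times> A \<in> null_sets (P1 \<Otimes>\<^sub>M P2)"
      using ac s1 unfolding absolutely_continuous_def by auto
    then show "A \<in> null_sets P2"
      using A assms(6) by (simp add: null_sets_def P2.emeasure_pair_measure_Times P1.emeasure_space_1)
  qed
qed



lemma ennreal_split_le: "ennreal (a::real) \<le> ennreal (a + b) + ennreal (- b)"
proof -
  have "ennreal a \<le> ennreal (max 0 (a + b) + max 0 (- b))"
    by (intro ennreal_leI) linarith
  also have "\<dots> = ennreal (max 0 (a + b)) + ennreal (max 0 (- b))"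
    by (rule ennreal_plus) auto
  also have "\<dots> = ennreal (a + b) + ennreal (- b)"
    by (simp add: ennreal_max_0)
  finally show ?thesis .
qed

lemma int_split_fst:
  assumes P1: "prob_space P1" and P2: "prob_space P2"
    and g1[measurable]: "g1 \<in> borel_measurable P1" and g2[measurable]: "g2 \<in> borel_measurable P2"
    and n1: "(\<integral>\<^sup>+x. ennreal (- g1 x) \<partial>P1) \<noteq> \<infinity>" and n2: "(\<integral>\<^sup>+x. ennreal (- g2 x) \<partial>P2) \<noteq> \<infinity>"
    and int: "integrable (P1 \<Otimes>\<^sub>M P2) (\<lambda>z. g1 (fst z) + g2 (snd z))"
  shows "integrable P1 g1" "integrable P2 g2"
proof -
  interpret P1: prob_space P1 by fact
  interpret P2: prob_space P2 by fact
  have d1: "distr (P1 \<Otimes>\<^sub>M P2) P1 fst = P1" by (rule P2.distr_pair_fst)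
  have d2: "distr (P1 \<Otimes>\<^sub>M P2) P2 snd = P2" by (rule distr_pair_snd'[OF P1 P2])
  have S: "(\<integral>\<^sup>+z. ennreal (g1 (fst z) + g2 (snd z)) \<partial>(P1 \<Otimes>\<^sub>M P2)) \<noteq> \<infinity>"
    using int unfolding real_integrable_def by blast
  have e1: "(\<integral>\<^sup>+z. f (fst z) \<partial>(P1 \<Otimes>\<^sub>M P2)) = (\<integral>\<^sup>+x. f x \<partial>P1)" if [measurable]: "f \<in> borel_measurable P1" for f
  proof -
    have "(\<integral>\<^sup>+x. f x \<partial>P1) = (\<integral>\<^sup>+x. f x \<partial>distr (P1 \<Otimes>\<^sub>M P2) P1 fst)" by (simp add: d1)
    also have "\<dots> = (\<integral>\<^sup>+z. f (fst z) \<partial>(P1 \<Otimes>\<^sub>M P2))" by (rule nn_integral_distr) auto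
    finally show ?thesis by simp
  qed
  have e2: "(\<integral>\<^sup>+z. f (snd z) \<partial>(P1 \<Otimes>\<^sub>M P2)) = (\<integral>\<^sup>+x. f x \<partial>P2)" if [measurable]: "f \<in> borel_measurable P2" for f
  proof -
    have "(\<integral>\<^sup>+x. f x \<partial>P2) = (\<integral>\<^sup>+x. f x \<partial>distr (P1 \<Otimes>\<^sub>M P2) P2 snd)" by (simp add: d2)
    also have "\<dots> = (\<integral>\<^sup>+z. f (snd z) \<partial>(P1 \<Otimes>\<^sub>M P2))" by (rule nn_integral_distr) auto
    finally show ?thesis by simp
  qed
  have "(\<integral>\<^sup>+x. ennreal (g1 x) \<partial>P1) = (\<integral>\<^sup>+z. ennreal (g1 (fst z)) \<partial>(P1 \<Otimes>\<^sub>M P2))"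
    by (rule e1[symmetric]) measurable
  also have "\<dots> \<le> (\<integral>\<^sup>+z. ennreal (g1 (fst z) + g2 (snd z)) + ennreal (- g2 (snd z)) \<partial>(P1 \<Otimes>\<^sub>M P2))"
    by (intro nn_integral_mono ennreal_split_le)
  also have "\<dots> = (\<integral>\<^sup>+z. ennreal (g1 (fst z) + g2 (snd z)) \<partial>(P1 \<Otimes>\<^sub>M P2)) + (\<integral>\<^sup>+z. ennreal (- g2 (snd z)) \<partial>(P1 \<Otimes>\<^sub>M P2))"
    by (rule nn_integral_add) auto
  also have "(\<integral>\<^sup>+z. ennreal (- g2 (snd z)) \<partial>(P1 \<Otimes>\<^sub>M P2)) = (\<integral>\<^sup>+x. ennreal (- g2 x) \<partial>P2)"
    by (rule e2) measurable
  finally have p1: "(\<integral>\<^sup>+x. ennreal (g1 x) \<partial>P1) \<noteq> \<infinity>"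
    using S n2 by (auto simp: top_unique ennreal_add_eq_top)
  show "integrable P1 g1" unfolding real_integrable_def using p1 n1 by simp
  have "(\<integral>\<^sup>+x. ennreal (g2 x) \<partial>P2) = (\<integral>\<^sup>+z. ennreal (g2 (snd z)) \<partial>(P1 \<Otimes>\<^sub>M P2))"
    by (rule e2[symmetric]) measurable
  also have "\<dots> \<le> (\<integral>\<^sup>+z. ennreal (g2 (snd z) + g1 (fst z)) + ennreal (- g1 (fst z)) \<partial>(P1 \<Otimes>\<^sub>M P2))"
    by (intro nn_integral_mono ennreal_split_le)
  also have "\<dots> = (\<integral>\<^sup>+z. ennreal (g1 (fst z) + g2 (snd z)) \<partial>(P1 \<Otimes>\<^sub>M P2)) + (\<integral>\<^sup>+z. ennreal (- g1 (fst z)) \<partial>(P1 \<Otimes>\<^sub>M P2))"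
    by (subst nn_integral_add) (auto simp: add.commute)
  also have "(\<integral>\<^sup>+z. ennreal (- g1 (fst z)) \<partial>(P1 \<Otimes>\<^sub>M P2)) = (\<integral>\<^sup>+x. ennreal (- g1 x) \<partial>P1)"
    by (rule e1) measurable
  finally have p2: "(\<integral>\<^sup>+x. ennreal (g2 x) \<partial>P2) \<noteq> \<infinity>"
    using S n1 by (auto simp: top_unique ennreal_add_eq_top)
  show "integrable P2 g2" unfolding real_integrable_def using p2 n2 by simp
qed



lemma kl_pair:
  assumes Q1: "prob_space Q1" and Q2: "prob_space Q2" and P1: "prob_space P1" and P2: "prob_space P2"
    and s1: "sets P1 = sets Q1" and s2: "sets P2 = sets Q2"
  shows "kl_loss (P1 \<Otimes>\<^sub>M P2) (Q1 \<Otimes>\<^sub>M Q2) = kl_loss P1 Q1 + kl_loss P2 Q2"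
proof (cases "absolutely_continuous Q1 P1 \<and> absolutely_continuous Q2 P2")
  case False
  then have "\<not> absolutely_continuous (Q1 \<Otimes>\<^sub>M Q2) (P1 \<Otimes>\<^sub>M P2)"
    using ac_pair_fst[OF Q1 Q2 P1 P2 s1 s2] by blast
  then show ?thesis using False by (auto simp: kl_not_ac)
next
  case True
  obtain h1 where h1[measurable]: "h1 \<in> borel_measurable Q1" and h1nn: "\<And>y. 0 \<le> h1 y"
    and h1P: "P1 = density Q1 (\<lambda>y. ennreal (h1 y))"
    using exists_real_density[OF Q1 P1 s1] True by blast
  obtain h2 where h2[measurable]: "h2 \<in> borel_measurable Q2" and h2nn: "\<And>y. 0 \<le> h2 y"
    and h2P: "P2 = density Q2 (\<lambda>y. ennreal (h2 y))"
    using exists_real_density[OF Q2 P2 s2] True by blast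
  interpret Q1: prob_space Q1 by fact
  interpret Q2: prob_space Q2 by fact
  interpret P1: prob_space P1 by fact
  interpret P2: prob_space P2 by fact
  interpret Q12: pair_prob_space Q1 Q2 ..
  interpret P12: pair_prob_space P1 P2 ..
  define H where "H z = h1 (fst z) * h2 (snd z)" for z
  have Hm[measurable]: "H \<in> borel_measurable (Q1 \<Otimes>\<^sub>M Q2)" unfolding H_def by measurable
  have Hnn: "\<And>z. 0 \<le> H z" unfolding H_def using h1nn h2nn by simp
  have P12: "P1 \<Otimes>\<^sub>M P2 = density (Q1 \<Otimes>\<^sub>M Q2) (\<lambda>z. ennreal (H z))"
  proof -
    have "P1 \<Otimes>\<^sub>M P2 = density Q1 (\<lambda>y. ennreal (h1 y)) \<Otimes>\<^sub>M density Q2 (\<lambda>y. ennreal (h2 y))"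
      using h1P h2P by simp
    also have "\<dots> = density (Q1 \<Otimes>\<^sub>M Q2) (\<lambda>(x,y). ennreal (h1 x) * ennreal (h2 y))"
      by (rule pair_measure_density) (use h2P P2.sigma_finite_measure_axioms Q2.sigma_finite_measure_axioms in auto)
    also have "(\<lambda>(x,y). ennreal (h1 x) * ennreal (h2 y)) = (\<lambda>z. ennreal (H z))"
      by (auto simp: H_def ennreal_mult h1nn h2nn)
    finally show ?thesis .
  qed
  have sp1: "space P1 = space Q1" "space P2 = space Q2" using s1 s2 sets_eq_imp_space_eq by blast+
  have g1[measurable]: "(\<lambda>x. ln (h1 x)) \<in> borel_measurable P1"
    unfolding measurable_cong_sets[OF s1 refl] by measurable
  have g2[measurable]: "(\<lambda>x. ln (h2 x)) \<in> borel_measurable P2"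
    unfolding measurable_cong_sets[OF s2 refl] by measurable
  have K1: "kl_loss P1 Q1 = (if integrable P1 (\<lambda>y. ln (h1 y)) then ennreal (\<integral>y. ln (h1 y) \<partial>P1) else \<infinity>)"
    by (rule kl_density_real[OF Q1 h1 h1nn h1P])
  have K2: "kl_loss P2 Q2 = (if integrable P2 (\<lambda>y. ln (h2 y)) then ennreal (\<integral>y. ln (h2 y) \<partial>P2) else \<infinity>)"
    by (rule kl_density_real[OF Q2 h2 h2nn h2P])
  have K12: "kl_loss (P1 \<Otimes>\<^sub>M P2) (Q1 \<Otimes>\<^sub>M Q2) = (if integrable (P1 \<Otimes>\<^sub>M P2) (\<lambda>y. ln (H y))
      then ennreal (\<integral>y. ln (H y) \<partial>(P1 \<Otimes>\<^sub>M P2)) else \<infinity>)"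
    by (rule kl_density_real[OF Q12.prob_space_axioms Hm Hnn P12])
  have d1: "distr (P1 \<Otimes>\<^sub>M P2) P1 fst = P1" by (rule P2.distr_pair_fst)
  have d2: "distr (P1 \<Otimes>\<^sub>M P2) P2 snd = P2" by (rule distr_pair_snd'[OF P1 P2])
  have a1: "AE x in P1. 0 < h1 x" unfolding h1P by (subst AE_density) auto
  have a2: "AE x in P2. 0 < h2 x" unfolding h2P by (subst AE_density) auto
  have a1': "AE z in P1 \<Otimes>\<^sub>M P2. 0 < h1 (fst z)"
  proof -
    have "AE z in distr (P1 \<Otimes>\<^sub>M P2) P1 fst. 0 < h1 z" unfolding d1 by (rule a1)
    then show ?thesis by (rule AE_distrD[rotated]) simp
  qed
  have a2': "AE z in P1 \<Otimes>\<^sub>M P2. 0 < h2 (snd z)"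
  proof -
    have "AE z in distr (P1 \<Otimes>\<^sub>M P2) P2 snd. 0 < h2 z" unfolding d2 by (rule a2)
    then show ?thesis by (rule AE_distrD[rotated]) simp
  qed
  have ae: "AE z in P1 \<Otimes>\<^sub>M P2. ln (H z) = ln (h1 (fst z)) + ln (h2 (snd z))"
    using a1' a2' by eventually_elim (simp add: H_def ln_mult)
  have mH: "(\<lambda>z. ln (H z)) \<in> borel_measurable (P1 \<Otimes>\<^sub>M P2)"
    unfolding measurable_cong_sets[OF sets_pair_measure_cong[OF s1 s2] refl] by measurable
  have mS: "(\<lambda>z. ln (h1 (fst z)) + ln (h2 (snd z))) \<in> borel_measurable (P1 \<Otimes>\<^sub>M P2)"
    by measurable
  have iS: "integrable (P1 \<Otimes>\<^sub>M P2) (\<lambda>y. ln (H y)) = integrable (P1 \<Otimes>\<^sub>M P2) (\<lambda>z. ln (h1 (fst z)) + ln (h2 (snd z)))"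
    by (rule integrable_cong_AE[OF mH mS ae])
  have vS: "(\<integral>y. ln (H y) \<partial>(P1 \<Otimes>\<^sub>M P2)) = (\<integral>z. ln (h1 (fst z)) + ln (h2 (snd z)) \<partial>(P1 \<Otimes>\<^sub>M P2))"
    by (rule integral_cong_AE[OF mH mS ae])
  have i1: "integrable (P1 \<Otimes>\<^sub>M P2) (\<lambda>z. ln (h1 (fst z))) = integrable P1 (\<lambda>x. ln (h1 x))"
    using integrable_distr_eq[of fst "P1 \<Otimes>\<^sub>M P2" P1 "\<lambda>x. ln (h1 x)"] d1 by simp
  have i2: "integrable (P1 \<Otimes>\<^sub>M P2) (\<lambda>z. ln (h2 (snd z))) = integrable P2 (\<lambda>x. ln (h2 x))"
    using integrable_distr_eq[of snd "P1 \<Otimes>\<^sub>M P2" P2 "\<lambda>x. ln (h2 x)"] d2 by simp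
  have v1: "(\<integral>z. ln (h1 (fst z)) \<partial>(P1 \<Otimes>\<^sub>M P2)) = (\<integral>x. ln (h1 x) \<partial>P1)"
    using integral_distr[of fst "P1 \<Otimes>\<^sub>M P2" P1 "\<lambda>x. ln (h1 x)"] d1 by simp
  have v2: "(\<integral>z. ln (h2 (snd z)) \<partial>(P1 \<Otimes>\<^sub>M P2)) = (\<integral>x. ln (h2 x) \<partial>P2)"
    using integral_distr[of snd "P1 \<Otimes>\<^sub>M P2" P2 "\<lambda>x. ln (h2 x)"] d2 by simp
  have n1: "(\<integral>\<^sup>+x. ennreal (- ln (h1 x)) \<partial>P1) \<noteq> \<infinity>"
    using kl_neg_part[OF Q1 h1 h1nn h1P] by (auto simp: top_unique)
  have n2: "(\<integral>\<^sup>+x. ennreal (- ln (h2 x)) \<partial>P2) \<noteq> \<infinity>"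
    using kl_neg_part[OF Q2 h2 h2nn h2P] by (auto simp: top_unique)
  show ?thesis
  proof (cases "integrable P1 (\<lambda>y. ln (h1 y)) \<and> integrable P2 (\<lambda>y. ln (h2 y))")
    case True
    then have int12: "integrable (P1 \<Otimes>\<^sub>M P2) (\<lambda>y. ln (H y))"
      unfolding iS using i1 i2 by (intro Bochner_Integration.integrable_add) auto
    have "(\<integral>y. ln (H y) \<partial>(P1 \<Otimes>\<^sub>M P2)) = (\<integral>x. ln (h1 x) \<partial>P1) + (\<integral>x. ln (h2 x) \<partial>P2)"
      unfolding vS using True i1 i2 v1 v2 by (subst Bochner_Integration.integral_add) auto
    moreover have "0 \<le> (\<integral>x. ln (h1 x) \<partial>P1)" using kl_nonneg_real[OF Q1 h1 h1nn h1P P1] True by blast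
    moreover have "0 \<le> (\<integral>x. ln (h2 x) \<partial>P2)" using kl_nonneg_real[OF Q2 h2 h2nn h2P P2] True by blast
    ultimately show ?thesis using True int12 unfolding K1 K2 K12 by (simp add: ennreal_plus)
  next
    case False
    then have "\<not> integrable (P1 \<Otimes>\<^sub>M P2) (\<lambda>y. ln (H y))"
      unfolding iS using int_split_fst[OF P1 P2 g1 g2 n1 n2] by blast
    then show ?thesis using False unfolding K1 K2 K12 by auto
  qed
qed



lemma distr_inv_id:
  assumes T: "T \<in> measurable M N" and T': "T' \<in> measurable N M"
    and inv: "\<And>x. x \<in> space M \<Longrightarrow> T' (T x) = x" and sP: "sets P = sets M"
  shows "distr (distr P N T) M T' = P"
proof -
  have T1: "T \<in> measurable P N" unfolding measurable_cong_sets[OF sP refl] by (rule T)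
  have sp: "space P = space M" using sP sets_eq_imp_space_eq by blast
  have "distr (distr P N T) M T' = distr P M (\<lambda>x. T' (T x))"
    using distr_distr[OF T' T1] by (simp add: comp_def)
  also have "\<dots> = distr P P (\<lambda>x. x)"
    by (rule distr_cong) (auto simp: sP sp inv)
  also have "\<dots> = P" by simp
  finally show ?thesis .
qed

lemma kl_distr:
  assumes Q: "prob_space Q" and P: "prob_space P" and sP: "sets P = sets M" and sQ: "sets Q = sets M"
    and T[measurable]: "T \<in> measurable M N" and T'[measurable]: "T' \<in> measurable N M"
    and inv1: "\<And>x. x \<in> space M \<Longrightarrow> T' (T x) = x" and inv2: "\<And>y. y \<in> space N \<Longrightarrow> T (T' y) = y"
  shows "kl_loss (distr P N T) (distr Q N T) = kl_loss P Q"
proof (cases "absolutely_continuous Q P")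
  case False
  have "\<not> absolutely_continuous (distr Q N T) (distr P N T)"
  proof
    assume ac: "absolutely_continuous (distr Q N T) (distr P N T)"
    have "absolutely_continuous Q P"
      unfolding absolutely_continuous_def
    proof
      fix A assume A: "A \<in> null_sets Q"
      then have As: "A \<in> sets M" using sQ by (auto simp: null_sets_def)
      define B where "B = T' -` A \<inter> space N"
      have Bs: "B \<in> sets N" unfolding B_def using T' As by (rule measurable_sets)
      have eqQ: "T -` B \<inter> space Q = A" unfolding B_def
        using sets.sets_into_space[OF As] inv1 T sQ sets_eq_imp_space_eq[OF sQ]
        by (auto simp: measurable_def)
      have eqP: "T -` B \<inter> space P = A" unfolding B_def
        using sets.sets_into_space[OF As] inv1 T sP sets_eq_imp_space_eq[OF sP]
        by (auto simp: measurable_def)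
      have TQ: "T \<in> measurable Q N" unfolding measurable_cong_sets[OF sQ refl] by (rule T)
      have TP: "T \<in> measurable P N" unfolding measurable_cong_sets[OF sP refl] by (rule T)
      have "B \<in> null_sets (distr Q N T)"
        using A Bs by (simp add: null_sets_def emeasure_distr[OF TQ] eqQ)
      then have "B \<in> null_sets (distr P N T)" using ac by (auto simp: absolutely_continuous_def)
      then show "A \<in> null_sets P"
        using Bs by (simp add: null_sets_def emeasure_distr[OF TP] eqP As sP)
    qed
    then show False using False by simp
  qed
  then show ?thesis using False by (simp add: kl_not_ac)
next
  case True
  obtain h where h[measurable]: "h \<in> borel_measurable Q" and hnn: "\<And>y. 0 \<le> h y"
    and hP: "P = density Q (\<lambda>y. ennreal (h y))"
    using exists_real_density[OF Q P _ True] sP sQ by auto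
  have hM[measurable]: "h \<in> borel_measurable M" using h unfolding measurable_cong_sets[OF sQ refl] .
  have TQ: "T \<in> measurable Q N" unfolding measurable_cong_sets[OF sQ refl] by (rule T)
  have TP: "T \<in> measurable P N" unfolding measurable_cong_sets[OF sP refl] by (rule T)
  have QQ: "prob_space (distr Q N T)" using Q TQ by (rule prob_space.prob_space_distr)
  have Q': "distr (distr Q N T) M T' = Q" by (rule distr_inv_id[OF T T' inv1 sQ])
  have dens: "distr P N T = density (distr Q N T) (\<lambda>y. ennreal (h (T' y)))"
  proof -
    have "distr P N T = distr (density (distr (distr Q N T) M T') (\<lambda>y. ennreal (h y))) N T"
      using hP Q' by simp
    also have "\<dots> = distr (density (distr (distr Q N T) M T') (\<lambda>y. ennreal (h y))) (distr Q N T) T"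
      by (rule distr_cong) auto
    also have "\<dots> = density (distr Q N T) ((\<lambda>y. ennreal (h y)) \<circ> T')"
      by (rule distr_density_distr) (auto simp: inv2)
    finally show ?thesis by (simp add: comp_def)
  qed
  have K: "kl_loss P Q = (if integrable P (\<lambda>y. ln (h y)) then ennreal (\<integral>y. ln (h y) \<partial>P) else \<infinity>)"
    by (rule kl_density_real[OF Q h hnn hP])
  have K': "kl_loss (distr P N T) (distr Q N T) = (if integrable (distr P N T) (\<lambda>y. ln (h (T' y)))
     then ennreal (\<integral>y. ln (h (T' y)) \<partial>distr P N T) else \<infinity>)"
    by (rule kl_density_real[OF QQ _ _ dens]) (auto simp: hnn)
  have spP: "space P = space M" using sP sets_eq_imp_space_eq by blast
  have m2: "(\<lambda>y. ln (h (T' y))) \<in> borel_measurable N" by measurable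
  have hP'[measurable]: "(\<lambda>y. ln (h y)) \<in> borel_measurable P" unfolding measurable_cong_sets[OF sP refl] by measurable
  have "integrable (distr P N T) (\<lambda>y. ln (h (T' y))) = integrable P (\<lambda>x. ln (h (T' (T x))))"
    by (rule integrable_distr_eq[OF TP m2])
  also have "\<dots> = integrable P (\<lambda>x. ln (h x))"
    using inv1 by (intro Bochner_Integration.integrable_cong) (auto simp: spP)
  finally have I: "integrable (distr P N T) (\<lambda>y. ln (h (T' y))) = integrable P (\<lambda>x. ln (h x))" .
  have "(\<integral>y. ln (h (T' y)) \<partial>distr P N T) = (\<integral>x. ln (h (T' (T x))) \<partial>P)"
    by (rule integral_distr[OF TP m2])
  also have "\<dots> = (\<integral>x. ln (h x) \<partial>P)"
    by (rule Bochner_Integration.integral_cong) (auto simp: spP inv1)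
  finally show ?thesis unfolding K K' I by simp
qed



lemma kl_PiM_insert:
  assumes iI: "i \<notin> I" and P: "\<And>j. prob_space (P j)" and Q: "\<And>j. prob_space (Q j)"
    and s: "\<And>j. sets (P j) = sets (Q j)"
  shows "kl_loss (PiM (insert i I) P) (PiM (insert i I) Q) = kl_loss (P i) (Q i) + kl_loss (PiM I P) (PiM I Q)"
proof -
  define T where "T = (\<lambda>(x, X). X(i := x) :: 'a \<Rightarrow> 'b)"
  define T' where "T' = (\<lambda>\<omega>::'a \<Rightarrow> 'b. (\<omega> i, restrict \<omega> I))"
  have dP: "distr (P i \<Otimes>\<^sub>M PiM I P) (PiM (insert i I) P) T = PiM (insert i I) P"
    unfolding T_def by (rule distr_pair_PiM_eq_PiM) (auto simp: P)
  have sPi: "sets (PiM J P) = sets (PiM J Q)" for J by (rule sets_PiM_cong) (auto simp: s)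
  have "distr (Q i \<Otimes>\<^sub>M PiM I Q) (PiM (insert i I) Q) T = PiM (insert i I) Q"
    unfolding T_def by (rule distr_pair_PiM_eq_PiM) (auto simp: Q)
  then have dQ: "distr (Q i \<Otimes>\<^sub>M PiM I Q) (PiM (insert i I) P) T = PiM (insert i I) Q"
    by (subst distr_cong[OF refl sPi]) auto
  have sM: "sets (Q i \<Otimes>\<^sub>M PiM I Q) = sets (P i \<Otimes>\<^sub>M PiM I P)"
    by (rule sets_pair_measure_cong) (auto simp: s sPi)
  have Tm: "T \<in> measurable (P i \<Otimes>\<^sub>M PiM I P) (PiM (insert i I) P)"
    unfolding T_def by measurable
  have T'm: "T' \<in> measurable (PiM (insert i I) P) (P i \<Otimes>\<^sub>M PiM I P)"
    unfolding T'_def by measurable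
  have inv1: "T' (T x) = x" if hx: "x \<in> space (P i \<Otimes>\<^sub>M PiM I P)" for x
  proof -
    obtain a X where x: "x = (a, X)" and X: "X \<in> space (PiM I P)"
      using hx by (cases x) (auto simp: space_pair_measure)
    have "restrict (X(i := a)) I = X"
      using X iI by (auto simp: space_PiM PiE_def extensional_def restrict_def fun_eq_iff)
    then show ?thesis by (simp add: x T_def T'_def)
  qed
  have inv2: "T (T' y) = y" if "y \<in> space (PiM (insert i I) P)" for y
    using that by (auto simp: space_PiM PiE_def extensional_def restrict_def fun_eq_iff T_def T'_def)
  have pp: "prob_space (PiM J P)" "prob_space (PiM J Q)" for J
    using P Q by (auto intro: prob_space_PiM)
  have "kl_loss (PiM (insert i I) P) (PiM (insert i I) Q) =
     kl_loss (distr (P i \<Otimes>\<^sub>M PiM I P) (PiM (insert i I) P) T) (distr (Q i \<Otimes>\<^sub>M PiM I Q) (PiM (insert i I) P) T)"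
    by (simp add: dP dQ)
  also have "\<dots> = kl_loss (P i \<Otimes>\<^sub>M PiM I P) (Q i \<Otimes>\<^sub>M PiM I Q)"
    by (rule kl_distr[OF _ _ refl sM Tm T'm inv1 inv2])
       (auto intro!: prob_space_pair simp: P Q pp)
  also have "\<dots> = kl_loss (P i) (Q i) + kl_loss (PiM I P) (PiM I Q)"
    by (rule kl_pair) (auto simp: P Q pp s sPi)
  finally show ?thesis .
qed



lemma kl_PiM_split:
  fixes P Q :: "nat \<Rightarrow> 'b measure"
  assumes P: "\<And>j. prob_space (P j)" and Q: "\<And>j. prob_space (Q j)"
    and s: "\<And>j. sets (P j) = sets (Q j)"
  shows "kl_loss (PiM UNIV P) (PiM UNIV Q) = (\<Sum>i<n. kl_loss (P i) (Q i)) + kl_loss (PiM {n..} P) (PiM {n..} Q)"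
proof (induction n)
  case 0
  then show ?case by simp
next
  case (Suc n)
  have "{n..} = insert n {Suc n..}" by auto
  then have "kl_loss (PiM {n..} P) (PiM {n..} Q) = kl_loss (P n) (Q n) + kl_loss (PiM {Suc n..} P) (PiM {Suc n..} Q)"
    using kl_PiM_insert[of n "{Suc n..}" P Q] P Q s by simp
  with Suc show ?case by (simp add: add.assoc)
qed

lemma prob_normal_measure: "0 < v \<Longrightarrow> prob_space (normal_measure m v)"
  unfolding normal_measure_def by (rule prob_space_normal_density) simp

lemma sets_normal_measure[simp]: "sets (normal_measure m v) = sets borel"
  unfolding normal_measure_def by simp

lemma ln_normal_density:
  assumes "0 < v"
  shows "ln (normal_density m (sqrt v) y) = - ln (2 * pi * v) / 2 - (y - m)\<^sup>2 / (2 * v)"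
proof -
  have "ln (normal_density m (sqrt v) y) = ln (1 / sqrt (2 * pi * v)) + ln (exp (-(y - m)\<^sup>2/ (2 * v)))"
    unfolding normal_density_def using assms by (subst ln_mult) auto
  also have "ln (1 / sqrt (2 * pi * v)) = - ln (2 * pi * v) / 2"
    using assms by (simp add: ln_div ln_sqrt)
  finally show ?thesis by simp
qed

lemma normal_moments:
  assumes v: "0 < v"
  shows "integrable (normal_measure m v) (\<lambda>y. (y - m) ^ k)"
    and "(\<integral>y. (y - m) ^ 2 \<partial>normal_measure m v) = v"
    and "(\<integral>y. (y - m) \<partial>normal_measure m v) = 0"
proof -
  have sv: "0 < sqrt v" using v by simp
  show "integrable (normal_measure m v) (\<lambda>y. (y - m) ^ k)"
    unfolding normal_measure_def
    by (subst integrable_density) (auto intro: integrable_normal_moment[OF sv])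
  have "(\<integral>y. (y - m) ^ (2*1) \<partial>normal_measure m v) = v"
    unfolding normal_measure_def
    using integral_normal_moment_even[OF sv, of m 1] v
    by (subst integral_density) (auto simp: fact_numeral)
  then show "(\<integral>y. (y - m) ^ 2 \<partial>normal_measure m v) = v" by simp
  have "(\<integral>y. (y - m) ^ (2*0+1) \<partial>normal_measure m v) = 0"
    unfolding normal_measure_def
    using integral_normal_moment_odd[OF sv, of m 0]
    by (subst integral_density) auto
  then show "(\<integral>y. (y - m) \<partial>normal_measure m v) = 0" by simp
qed

lemma normal_quadratic:
  assumes v: "0 < v"
  shows "integrable (normal_measure m v) (\<lambda>y. a + b * (y - m) + c * (y - m)\<^sup>2)"
    and "(\<integral>y. a + b * (y - m) + c * (y - m)\<^sup>2 \<partial>normal_measure m v) = a + c * v"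
proof -
  interpret prob_space "normal_measure m v" using prob_normal_measure[OF v] .
  have i1: "integrable (normal_measure m v) (\<lambda>y. (y - m))" using normal_moments(1)[OF v, of m 1] by simp
  have i2: "integrable (normal_measure m v) (\<lambda>y. (y - m)\<^sup>2)" using normal_moments(1)[OF v, of m 2] by simp
  show "integrable (normal_measure m v) (\<lambda>y. a + b * (y - m) + c * (y - m)\<^sup>2)"
    using i1 i2 by auto
  show "(\<integral>y. a + b * (y - m) + c * (y - m)\<^sup>2 \<partial>normal_measure m v) = a + c * v"
    using i1 i2 normal_moments(2,3)[OF v, of m] by (simp add: prob_space)
qed



lemma kl_normal:
  assumes w1: "0 < w1" and w2: "0 < w2"
  shows "kl_loss (normal_measure m1 w1) (normal_measure m2 w2) =
    ennreal ((ln (w2 / w1) + (w1 + (m1 - m2)\<^sup>2) / w2 - 1) / 2)"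
proof -
  define g1 where "g1 = normal_density m1 (sqrt w1)"
  define g2 where "g2 = normal_density m2 (sqrt w2)"
  define h where "h y = g1 y / g2 y" for y
  have g1p: "0 < g1 y" for y unfolding g1_def using w1 by (simp add: normal_density_pos)
  have g2p: "0 < g2 y" for y unfolding g2_def using w2 by (simp add: normal_density_pos)
  have hnn: "0 \<le> h y" for y unfolding h_def using g1p[of y] g2p[of y] by simp
  have hm[measurable]: "h \<in> borel_measurable (normal_measure m2 w2)"
    unfolding h_def g1_def g2_def measurable_cong_sets[OF sets_normal_measure refl] by measurable
  have dens: "normal_measure m1 w1 = density (normal_measure m2 w2) (\<lambda>y. ennreal (h y))"
  proof -
    have "density (normal_measure m2 w2) (\<lambda>y. ennreal (h y)) =
          density lborel (\<lambda>y. ennreal (g2 y) * ennreal (h y))"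
      unfolding normal_measure_def g2_def
      by (rule density_density_eq) (auto simp: h_def g1_def g2_def)
    also have "\<dots> = density lborel (\<lambda>y. ennreal (g1 y))"
      using g1p g2p apply (intro density_cong) apply (auto simp: h_def g1_def g2_def ennreal_mult[symmetric] intro!: AE_I2) by (metis less_irrefl)
    finally show ?thesis unfolding normal_measure_def g1_def by simp
  qed
  have K: "kl_loss (normal_measure m1 w1) (normal_measure m2 w2) =
     (if integrable (normal_measure m1 w1) (\<lambda>y. ln (h y))
      then ennreal (\<integral>y. ln (h y) \<partial>normal_measure m1 w1) else \<infinity>)"
    by (rule kl_density_real[OF prob_normal_measure[OF w2] hm hnn dens])
  define a where "a = ln (w2 / w1) / 2 + (m1 - m2)\<^sup>2 / (2 * w2)"
  define b where "b = (m1 - m2) / w2"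
  define c where "c = - 1 / (2 * w1) + 1 / (2 * w2)"
  have A: "a = (ln w2 - ln w1) / 2 + (m1 - m2)\<^sup>2 / (2 * w2)"
    unfolding a_def using w1 w2 by (simp add: ln_div)
  have eq: "ln (h y) = a + b * (y - m1) + c * (y - m1)\<^sup>2" for y
  proof -
    have "ln (h y) = ln (g1 y) - ln (g2 y)" unfolding h_def using g1p[of y] g2p[of y] by (simp add: ln_div)
    also have "\<dots> = (- ln (2 * pi * w1) / 2 - (y - m1)\<^sup>2 / (2 * w1)) - (- ln (2 * pi * w2) / 2 - (y - m2)\<^sup>2 / (2 * w2))"
      unfolding g1_def g2_def using w1 w2 by (simp add: ln_normal_density)
    also have "\<dots> = (ln w2 - ln w1) / 2 - (y - m1)\<^sup>2 / (2 * w1) + (y - m2)\<^sup>2 / (2 * w2)"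
      using w1 w2 by (simp add: ln_mult algebra_simps diff_divide_distrib add_divide_distrib)
    also have "\<dots> = a + b * (y - m1) + c * (y - m1)\<^sup>2"
      unfolding A b_def c_def using w1 w2 by (simp add: field_simps power2_eq_square)
    finally show ?thesis .
  qed
  have "integrable (normal_measure m1 w1) (\<lambda>y. ln (h y))"
    unfolding eq by (rule normal_quadratic(1)[OF w1])
  moreover have "(\<integral>y. ln (h y) \<partial>normal_measure m1 w1) = a + c * w1"
    unfolding eq by (rule normal_quadratic(2)[OF w1])
  moreover have "a + c * w1 = (ln (w2 / w1) + (w1 + (m1 - m2)\<^sup>2) / w2 - 1) / 2"
    unfolding a_def c_def using w1 w2 by (simp add: field_simps)
  ultimately have I1: "integrable (normal_measure m1 w1) (\<lambda>y. ln (h y))"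
    and V: "(\<integral>y. ln (h y) \<partial>normal_measure m1 w1) = (ln (w2 / w1) + (w1 + (m1 - m2)\<^sup>2) / w2 - 1) / 2"
    by auto
  show ?thesis unfolding K V using I1 by (simp only: if_True)
qed



definition rr :: "real \<Rightarrow> real \<Rightarrow> real \<Rightarrow> real \<Rightarrow> real" where
  "rr u w th t = (let a = t\<^sup>2 / (t\<^sup>2 + u); s = a * u + w in
     (ln (s / w) + (w + (1 - a)\<^sup>2 * th\<^sup>2 + a\<^sup>2 * u) / s - 1) / 2)"

definition Ktail :: "real \<Rightarrow> (nat \<Rightarrow> real) \<Rightarrow> nat \<Rightarrow> ennreal" where
  "Ktail w th d = kl_loss (PiM {d..} (\<lambda>i. normal_measure (th i) w)) (PiM {d..} (\<lambda>i. normal_measure 0 w))"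

lemma kl_term_nonneg:
  fixes w s q :: real
  assumes w: "0 < w" and s: "0 < s" and that: "0 \<le> q"
  shows "0 \<le> (ln (s / w) + (w + q) / s - 1) / 2"
proof -
  have "ln (w / s) \<le> w / s - 1" using w s by (intro ln_le_minus_one) simp
  then have "1 - w / s \<le> ln (s / w)" using w s by (simp add: ln_div)
  moreover have "w / s \<le> (w + q) / s" using s that by (simp add: divide_right_mono)
  ultimately show ?thesis by simp
qed

lemma expect_kl_term:
  assumes u: "0 < u" and w: "0 < w" and a: "0 \<le> a"
  defines "s \<equiv> a * u + w"
  shows "(\<integral>\<^sup>+y. ennreal ((ln (s / w) + (w + (th - a * y)\<^sup>2) / s - 1) / 2) \<partial>normal_measure th u)
    = ennreal ((ln (s / w) + (w + (1 - a)\<^sup>2 * th\<^sup>2 + a\<^sup>2 * u) / s - 1) / 2)"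
proof -
  have s: "0 < s" unfolding s_def using u w a by (simp add: add_nonneg_pos)
  define A where "A = (ln (s / w) + (w + (1 - a)\<^sup>2 * th\<^sup>2) / s - 1) / 2"
  define B where "B = - ((1 - a) * th * a) / s"
  define C where "C = a\<^sup>2 / (2 * s)"
  have eq: "(ln (s / w) + (w + (th - a * y)\<^sup>2) / s - 1) / 2 = A + B * (y - th) + C * (y - th)\<^sup>2" for y
    unfolding A_def B_def C_def using s by (simp add: field_simps power2_eq_square)
  have "(\<integral>\<^sup>+y. ennreal ((ln (s / w) + (w + (th - a * y)\<^sup>2) / s - 1) / 2) \<partial>normal_measure th u)
     = ennreal (\<integral>y. (ln (s / w) + (w + (th - a * y)\<^sup>2) / s - 1) / 2 \<partial>normal_measure th u)"
  proof -
    have nn: "0 \<le> A + B * (y - th) + C * (y - th)\<^sup>2" for y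
      using kl_term_nonneg[OF w s, of "(th - a * y)\<^sup>2"] eq[of y] by simp
    show ?thesis unfolding eq
      by (rule nn_integral_eq_integral[OF normal_quadratic(1)[OF u]]) (use nn in auto)
  qed
  also have "(\<integral>y. (ln (s / w) + (w + (th - a * y)\<^sup>2) / s - 1) / 2 \<partial>normal_measure th u) = A + C * u"
    unfolding eq by (rule normal_quadratic(2)[OF u])
  also have "A + C * u = (ln (s / w) + (w + (1 - a)\<^sup>2 * th\<^sup>2 + a\<^sup>2 * u) / s - 1) / 2"
    unfolding A_def C_def using s by (simp add: field_simps)
  finally show ?thesis .
qed



lemma nn_integral_PiM_component:
  assumes M: "\<And>i. prob_space (M i)" and f: "f \<in> borel_measurable (M i)"
  shows "(\<integral>\<^sup>+x. f (x i) \<partial>PiM UNIV M) = (\<integral>\<^sup>+y. f y \<partial>M i)"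
proof -
  have "(\<integral>\<^sup>+y. f y \<partial>M i) = (\<integral>\<^sup>+y. f y \<partial>distr (PiM UNIV M) (M i) (\<lambda>\<omega>. \<omega> i))"
    by (simp add: distr_PiM_component M)
  also have "\<dots> = (\<integral>\<^sup>+x. f (x i) \<partial>PiM UNIV M)"
    by (rule nn_integral_distr) (auto simp: f)
  finally show ?thesis by simp
qed

lemma kl_pointwise:
  fixes eps eps' :: real and \<tau> \<theta> x :: "nat \<Rightarrow> real"
  assumes eps: "0 < eps" and eps': "0 < eps'" and tail: "\<forall>i\<ge>d. \<tau> i = 0"
  defines "a \<equiv> \<lambda>i. (\<tau> i)\<^sup>2 / ((\<tau> i)\<^sup>2 + eps\<^sup>2)"
  defines "s \<equiv> \<lambda>i. a i * eps\<^sup>2 + eps'\<^sup>2"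
  shows "kl_loss (gauss_seq \<theta> (\<lambda>_. eps'\<^sup>2)) (pred_G eps eps' \<tau> x) =
    (\<Sum>i<d. ennreal ((ln (s i / eps'\<^sup>2) + (eps'\<^sup>2 + (\<theta> i - a i * x i)\<^sup>2) / s i - 1) / 2)) + Ktail (eps'\<^sup>2) \<theta> d"
proof -
  have a0: "0 \<le> a i" for i unfolding a_def by simp
  have sp: "0 < s i" for i unfolding s_def using a0[of i] eps' by (simp add: add_nonneg_pos)
  have pg: "pred_G eps eps' \<tau> x = PiM UNIV (\<lambda>i. normal_measure (a i * x i) (s i))"
    unfolding pred_G_def gauss_seq_def a_def s_def by (simp add: field_simps)
  have w: "0 < eps'\<^sup>2" using eps' by simp
  have "kl_loss (gauss_seq \<theta> (\<lambda>_. eps'\<^sup>2)) (pred_G eps eps' \<tau> x) =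
     (\<Sum>i<d. kl_loss (normal_measure (\<theta> i) (eps'\<^sup>2)) (normal_measure (a i * x i) (s i))) +
     kl_loss (PiM {d..} (\<lambda>i. normal_measure (\<theta> i) (eps'\<^sup>2))) (PiM {d..} (\<lambda>i. normal_measure (a i * x i) (s i)))"
    unfolding pg gauss_seq_def
    by (rule kl_PiM_split) (auto intro: prob_normal_measure sp w)
  also have "PiM {d..} (\<lambda>i. normal_measure (a i * x i) (s i)) = PiM {d..} (\<lambda>i. normal_measure 0 (eps'\<^sup>2))"
    by (rule PiM_cong) (auto simp: a_def s_def tail)
  also have "(\<Sum>i<d. kl_loss (normal_measure (\<theta> i) (eps'\<^sup>2)) (normal_measure (a i * x i) (s i))) =
    (\<Sum>i<d. ennreal ((ln (s i / eps'\<^sup>2) + (eps'\<^sup>2 + (\<theta> i - a i * x i)\<^sup>2) / s i - 1) / 2))"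
    by (rule sum.cong) (auto simp: kl_normal[OF w sp])
  finally show ?thesis unfolding Ktail_def by simp
qed

lemma risk_formula:
  fixes eps eps' :: real and \<tau> \<theta> :: "nat \<Rightarrow> real"
  assumes eps: "0 < eps" and eps': "0 < eps'" and tail: "\<forall>i\<ge>d. \<tau> i = 0"
  shows "risk eps eps' \<theta> (pred_G eps eps' \<tau>) =
    (\<Sum>i<d. ennreal (rr (eps\<^sup>2) (eps'\<^sup>2) (\<theta> i) (\<tau> i))) + Ktail (eps'\<^sup>2) \<theta> d"
proof -
  define a where "a = (\<lambda>i. (\<tau> i)\<^sup>2 / ((\<tau> i)\<^sup>2 + eps\<^sup>2))"
  define s where "s = (\<lambda>i. a i * eps\<^sup>2 + eps'\<^sup>2)"
  define k where "k i y = ennreal ((ln (s i / eps'\<^sup>2) + (eps'\<^sup>2 + (\<theta> i - a i * y)\<^sup>2) / s i - 1) / 2)" for i y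
  have a0: "0 \<le> a i" for i unfolding a_def by simp
  have u: "0 < eps\<^sup>2" using eps by simp
  have w: "0 < eps'\<^sup>2" using eps' by simp
  have km[measurable]: "k i \<in> borel_measurable borel" for i unfolding k_def by measurable
  have km': "k i \<in> borel_measurable (normal_measure m v)" for i m v
    unfolding measurable_cong_sets[OF sets_normal_measure refl] by (rule km)
  have PM: "\<And>i. prob_space (normal_measure (\<theta> i) (eps\<^sup>2))" using prob_normal_measure[OF u] by blast
  interpret G: prob_space "gauss_seq \<theta> (\<lambda>_. eps\<^sup>2)" unfolding gauss_seq_def using PM by (rule prob_space_PiM)
  have "risk eps eps' \<theta> (pred_G eps eps' \<tau>) = (\<integral>\<^sup>+x. (\<Sum>i<d. k i (x i)) + Ktail (eps'\<^sup>2) \<theta> d \<partial>gauss_seq \<theta> (\<lambda>_. eps\<^sup>2))"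
    unfolding risk_def k_def using kl_pointwise[OF eps eps' tail] a_def s_def by simp
  also have "\<dots> = (\<Sum>i<d. \<integral>\<^sup>+x. k i (x i) \<partial>gauss_seq \<theta> (\<lambda>_. eps\<^sup>2)) + Ktail (eps'\<^sup>2) \<theta> d"
  proof -
    have kim: "(\<lambda>x. k i (x i)) \<in> borel_measurable (gauss_seq \<theta> (\<lambda>_. eps\<^sup>2))" for i
      unfolding gauss_seq_def
      by (rule measurable_compose[OF measurable_component_singleton[OF UNIV_I, of i "\<lambda>i. normal_measure (\<theta> i) (eps\<^sup>2)"] km'[of i "\<theta> i" "eps\<^sup>2"]])
    have "(\<lambda>x. \<Sum>i<d. k i (x i)) \<in> borel_measurable (gauss_seq \<theta> (\<lambda>_. eps\<^sup>2))"
      using kim by (rule borel_measurable_sum)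
    then show ?thesis
      by (subst nn_integral_add) (auto simp: nn_integral_sum kim G.emeasure_space_1)
  qed
  also have "(\<Sum>i<d. \<integral>\<^sup>+x. k i (x i) \<partial>gauss_seq \<theta> (\<lambda>_. eps\<^sup>2)) = (\<Sum>i<d. ennreal (rr (eps\<^sup>2) (eps'\<^sup>2) (\<theta> i) (\<tau> i)))"
  proof (rule sum.cong[OF refl])
    fix i
    have "(\<integral>\<^sup>+x. k i (x i) \<partial>gauss_seq \<theta> (\<lambda>_. eps\<^sup>2)) = (\<integral>\<^sup>+y. k i y \<partial>normal_measure (\<theta> i) (eps\<^sup>2))"
      unfolding gauss_seq_def by (rule nn_integral_PiM_component[OF PM km'])
    also have "\<dots> = ennreal (rr (eps\<^sup>2) (eps'\<^sup>2) (\<theta> i) (\<tau> i))"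
      unfolding k_def s_def using expect_kl_term[OF u w a0[of i], of "\<theta> i"]
      by (simp add: rr_def a_def Let_def)
    finally show "(\<integral>\<^sup>+x. k i (x i) \<partial>gauss_seq \<theta> (\<lambda>_. eps\<^sup>2)) = ennreal (rr (eps\<^sup>2) (eps'\<^sup>2) (\<theta> i) (\<tau> i))" .
  qed
  finally show ?thesis .
qed



definition VV :: "real \<Rightarrow> real \<Rightarrow> real \<Rightarrow> real" where
  "VV u w a = (ln ((a * u + w) / w) + (w + a\<^sup>2 * u) / (a * u + w) - 1) / 2"

definition BB :: "real \<Rightarrow> real \<Rightarrow> real \<Rightarrow> real \<Rightarrow> real" where
  "BB u w th a = (1 - a)\<^sup>2 * th\<^sup>2 / (2 * (a * u + w))"

definition AA :: "real \<Rightarrow> real \<Rightarrow> real" where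
  "AA u t = t\<^sup>2 / (t\<^sup>2 + u)"

lemma rr_split: "0 < u \<Longrightarrow> 0 < w \<Longrightarrow> rr u w th t = VV u w (AA u t) + BB u w th (AA u t)"
proof -
  assume u: "0 < u" and w: "0 < w"
  define a where "a = AA u t"
  have a0: "0 \<le> a" unfolding a_def AA_def using u by (simp add: add_nonneg_pos)
  have s: "0 < a * u + w" using a0 u w by (simp add: add_nonneg_pos)
  have "rr u w th t = (ln ((a * u + w) / w) + (w + (1 - a)\<^sup>2 * th\<^sup>2 + a\<^sup>2 * u) / (a * u + w) - 1) / 2"
    unfolding rr_def a_def AA_def Let_def by simp
  also have "\<dots> = VV u w a + BB u w th a"
  proof -
    have "(w + (1 - a)\<^sup>2 * th\<^sup>2 + a\<^sup>2 * u) / (a * u + w) = (w + a\<^sup>2 * u) / (a * u + w) + (1 - a)\<^sup>2 * th\<^sup>2 / (a * u + w)"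
      by (simp add: add_divide_distrib[symmetric] algebra_simps)
    moreover have "(1 - a)\<^sup>2 * th\<^sup>2 / (2 * (a * u + w)) = ((1 - a)\<^sup>2 * th\<^sup>2 / (a * u + w)) / 2" by simp
    ultimately show ?thesis unfolding VV_def BB_def by (simp add: add_divide_distrib diff_divide_distrib)
  qed
  finally show ?thesis unfolding a_def .
qed

lemma AA_nonneg: "0 < u \<Longrightarrow> 0 \<le> AA u t" unfolding AA_def by (simp add: add_nonneg_pos)

lemma AA_le1: assumes "0 < u" shows "AA u t \<le> 1"
proof -
  have "0 < t\<^sup>2 + u" using assms by (simp add: add_nonneg_pos)
  then show ?thesis unfolding AA_def using assms by (simp add: divide_le_eq_1)
qed

lemma AA_mono: assumes u: "0 < u" and t: "0 \<le> t" "t \<le> t'" shows "AA u t \<le> AA u t'"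
proof -
  have p1: "0 < t\<^sup>2 + u" "0 < t'\<^sup>2 + u" using u by (simp_all add: add_nonneg_pos)
  have "t\<^sup>2 \<le> t'\<^sup>2" using t by (intro power_mono) auto
  then have "u / (t'\<^sup>2 + u) \<le> u / (t\<^sup>2 + u)" using u p1 by (intro divide_left_mono) auto
  moreover have "AA u t = 1 - u / (t\<^sup>2 + u)" "AA u t' = 1 - u / (t'\<^sup>2 + u)"
    unfolding AA_def using p1 by (auto simp: field_simps)
  ultimately show ?thesis by simp
qed

lemma one_minus_AA: assumes "0 < u" shows "1 - AA u t = u / (t\<^sup>2 + u)"
proof -
  have "0 < t\<^sup>2 + u" using assms by (simp add: add_nonneg_pos)
  then show ?thesis unfolding AA_def by (simp add: field_simps)
qed

lemma VV_mono:
  assumes u: "0 < u" and w: "0 < w" and a: "0 \<le> a" "a \<le> a'"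
  shows "VV u w a \<le> VV u w a'"
proof -
  define s where "s = a * u + w"
  define s' where "s' = a' * u + w"
  define h where "h = a' - a"
  have h: "0 \<le> h" using a unfolding h_def by simp
  have sp: "0 < s" unfolding s_def using a u w by (simp add: add_nonneg_pos)
  have sp': "0 < s'" unfolding s'_def using a u w by (simp add: add_nonneg_pos)
  have "ln (s / s') \<le> s / s' - 1" using sp sp' by (intro ln_le_minus_one) simp
  then have l: "1 - s / s' \<le> ln s' - ln s" using sp sp' by (simp add: ln_div)
  have m: "(1 - s / s' + (w + a'\<^sup>2 * u) / s' - (w + a\<^sup>2 * u) / s) * (s * s') =
      s * s' - s * s + (w + a'\<^sup>2 * u) * s - (w + a\<^sup>2 * u) * s'"
    using sp sp' by (simp add: field_simps)
  have p: "s * s' - s * s + (w + a'\<^sup>2 * u) * s - (w + a\<^sup>2 * u) * s' =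
      h * u * (a * u + a\<^sup>2 * u + 2 * a * w + h * s)"
    unfolding h_def s_def s'_def by (simp add: power2_eq_square algebra_simps)
  have eq: "1 - s / s' + (w + a'\<^sup>2 * u) / s' - (w + a\<^sup>2 * u) / s =
      h * u * (a * u + a\<^sup>2 * u + 2 * a * w + h * s) / (s * s')"
    using m p sp sp' by (simp add: eq_divide_eq)
  have "0 \<le> h * u * (a * u + a\<^sup>2 * u + 2 * a * w + h * s) / (s * s')"
    using h u w a sp sp' by (intro divide_nonneg_pos mult_nonneg_nonneg add_nonneg_nonneg) auto
  then have "0 \<le> (ln s' - ln s) + (w + a'\<^sup>2 * u) / s' - (w + a\<^sup>2 * u) / s"
    using l eq by linarith
  moreover have "ln (s / w) = ln s - ln w" "ln (s' / w) = ln s' - ln w" using w sp sp' by (simp_all add: ln_div)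
  moreover define X where "X = (w + a\<^sup>2 * u) / s"
  moreover define X' where "X' = (w + a'\<^sup>2 * u) / s'"
  ultimately show ?thesis unfolding VV_def s_def[symmetric] s'_def[symmetric] X_def[symmetric] X'_def[symmetric]
    by simp
qed

lemma VV_0: "0 < w \<Longrightarrow> VV u w 0 = 0" unfolding VV_def by simp

lemma VV_nonneg: "0 < u \<Longrightarrow> 0 < w \<Longrightarrow> 0 \<le> a \<Longrightarrow> 0 \<le> VV u w a"
  using VV_mono[of u w 0 a] VV_0[of w u] by simp

lemma VV_1: "0 < u \<Longrightarrow> 0 < w \<Longrightarrow> VV u w 1 = ln ((u + w) / w) / 2"
  unfolding VV_def by (simp add: add.commute)

lemma BB_nonneg: "0 < u \<Longrightarrow> 0 < w \<Longrightarrow> 0 \<le> a \<Longrightarrow> 0 \<le> BB u w th a"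
  unfolding BB_def by (intro divide_nonneg_pos) (auto simp: add_nonneg_pos)

lemma BB_antimono:
  assumes u: "0 < u" and w: "0 < w" and a: "0 \<le> a" "a \<le> a'" "a' \<le> 1"
  shows "BB u w th a' \<le> BB u w th a"
proof -
  have s: "0 < a * u + w" using a u w by (simp add: add_nonneg_pos)
  have s': "a * u + w \<le> a' * u + w" using a u by (simp add: mult_right_mono)
  have "(1 - a')\<^sup>2 \<le> (1 - a)\<^sup>2" using a by (intro power_mono) auto
  then have n: "(1 - a')\<^sup>2 * th\<^sup>2 \<le> (1 - a)\<^sup>2 * th\<^sup>2" by (intro mult_right_mono) auto
  have "(1 - a')\<^sup>2 * th\<^sup>2 / (2 * (a' * u + w)) \<le> (1 - a')\<^sup>2 * th\<^sup>2 / (2 * (a * u + w))"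
    using s s' by (intro divide_left_mono) auto
  also have "\<dots> \<le> (1 - a)\<^sup>2 * th\<^sup>2 / (2 * (a * u + w))"
    using n s by (intro divide_right_mono) auto
  finally show ?thesis unfolding BB_def .
qed

lemma BB_bound:
  assumes u: "0 < u" and w: "0 < w" and a: "0 \<le> a" "a \<le> 1"
  shows "BB u w th a \<le> (1 - a) * th\<^sup>2 / (2 * w)"
proof -
  have s: "w \<le> a * u + w" using a u by simp
  have "(1 - a) * (1 - a) \<le> (1 - a) * 1" using a by (intro mult_left_mono) auto
  then have "(1 - a)\<^sup>2 \<le> (1 - a)" by (simp add: power2_eq_square)
  then have n: "(1 - a)\<^sup>2 * th\<^sup>2 \<le> (1 - a) * th\<^sup>2" by (intro mult_right_mono) auto
  have "(1 - a)\<^sup>2 * th\<^sup>2 / (2 * (a * u + w)) \<le> (1 - a)\<^sup>2 * th\<^sup>2 / (2 * w)"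
    using s w by (intro divide_left_mono) auto
  also have "\<dots> \<le> (1 - a) * th\<^sup>2 / (2 * w)"
    using n w by (intro divide_right_mono) auto
  finally show ?thesis unfolding BB_def .
qed



lemma rr_large:
  assumes u: "0 < u" and w: "0 < w"
  shows "rr u w th t \<le> ln ((u + w) / w) / 2 + u / (t\<^sup>2 + u) * th\<^sup>2 / (2 * w)"
proof -
  have a0: "0 \<le> AA u t" and a1: "AA u t \<le> 1" using AA_nonneg[OF u] AA_le1[OF u] by auto
  have "VV u w (AA u t) \<le> VV u w 1" by (rule VV_mono[OF u w a0 a1])
  also have "\<dots> = ln ((u + w) / w) / 2" by (rule VV_1[OF u w])
  finally have 1: "VV u w (AA u t) \<le> ln ((u + w) / w) / 2" .
  have "BB u w th (AA u t) \<le> (1 - AA u t) * th\<^sup>2 / (2 * w)" by (rule BB_bound[OF u w a0 a1])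
  also have "\<dots> = u / (t\<^sup>2 + u) * th\<^sup>2 / (2 * w)" by (simp add: one_minus_AA[OF u])
  finally have 2: "BB u w th (AA u t) \<le> u / (t\<^sup>2 + u) * th\<^sup>2 / (2 * w)" .
  show ?thesis using 1 2 rr_split[OF u w] by simp
qed

lemma block_start_Suc: "block_start b (Suc j) = block_start b j + b j"
  unfolding block_start_def by simp

lemma block_start_mono: "m \<le> n \<Longrightarrow> block_start b m \<le> block_start b n"
  unfolding block_start_def by (rule sum_mono2) auto

lemma card_block: "card (block b j) = b j"
  unfolding block_def block_start_Suc by simp

lemma block_unique:
  assumes "i \<in> block b j" "i \<in> block b j'" shows "j = j'"
proof (rule ccontr)
  assume "j \<noteq> j'"
  then consider "j < j'" | "j' < j" by linarith
  then show False
  proof cases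
    case 1
    then have "block_start b (Suc j) \<le> block_start b j'" by (intro block_start_mono) simp
    then show False using assms unfolding block_def by auto
  next
    case 2
    then have "block_start b (Suc j') \<le> block_start b j" by (intro block_start_mono) simp
    then show False using assms unfolding block_def by auto
  qed
qed

lemma sum_blocks:
  "(\<Sum>i<block_start b n. f i) = (\<Sum>j<n. \<Sum>i\<in>block b j. f i)"
proof (induction n)
  case 0
  then show ?case by (simp add: block_start_def)
next
  case (Suc n)
  have "(\<Sum>i<block_start b (Suc n). f i) = (\<Sum>i\<in>{0..<block_start b n}. f i) + (\<Sum>i\<in>{block_start b n..<block_start b (Suc n)}. f i)"
    unfolding atLeast0LessThan[symmetric] by (rule sum.atLeastLessThan_concat[symmetric]) (auto simp: block_start_Suc)
  also have "(\<Sum>i\<in>{0..<block_start b n}. f i) = (\<Sum>i<block_start b n. f i)" by (simp add: atLeast0LessThan)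
  finally show ?case using Suc by (simp add: block_def)
qed



lemma block_ineq:
  fixes u w \<eta> \<delta> :: real and b :: "nat \<Rightarrow> nat" and \<tau> \<theta> :: "nat \<Rightarrow> real"
  assumes u: "0 < u" and w: "0 < w" and eta: "0 < \<eta>" and dpos: "0 < d"
    and cp: "consecutive_partition d b J"
    and ratio: "\<forall>j. Suc j < J \<longrightarrow> real (b (Suc j)) / real (b j) \<le> 1 + \<eta>"
    and mon: "\<forall>i j. i \<le> j \<and> j < d \<longrightarrow> \<tau> j \<le> \<tau> i" and nn: "\<forall>i. 0 \<le> \<tau> i"
    and delta: "0 < \<delta>"
  shows "\<exists>\<tau>'. (\<forall>i. 0 \<le> \<tau>' i) \<and> (\<forall>i\<ge>d. \<tau>' i = 0) \<and>
      (\<forall>j<J. \<forall>i\<in>block b j. \<forall>i'\<in>block b j. \<tau>' i = \<tau>' i') \<and>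
      (\<Sum>i<d. rr u w (\<theta> i) (\<tau>' i)) \<le> (1 + \<eta>) * (\<Sum>i<d. rr u w (\<theta> i) (\<tau> i)) + real (b 0) * (ln ((u + w) / w) / 2) + \<delta>"
proof -
  have bpos: "\<And>j. j < J \<Longrightarrow> 0 < b j" and dJ: "block_start b J = d"
    using cp unfolding consecutive_partition_def block_start_def by auto
  obtain J' where J': "J = Suc J'" using dpos dJ by (cases J) (auto simp: block_start_def)
  define M where "M = (\<Sum>i<d. (\<theta> i)\<^sup>2)"
  have M0: "0 \<le> M" unfolding M_def by (simp add: sum_nonneg)
  define T where "T = sqrt (u * (M + 1) / (2 * w * \<delta>))"
  have T2: "T\<^sup>2 = u * (M + 1) / (2 * w * \<delta>)" unfolding T_def using u w delta M0 by simp
  have Tpos: "0 < T" unfolding T_def using u w delta M0 by simp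
  have Tsmall: "u / (T\<^sup>2 + u) * M / (2 * w) \<le> \<delta>"
  proof -
    have tp: "0 < T\<^sup>2" "0 < T\<^sup>2 + u" using Tpos u by (auto simp: add_pos_pos)
    have "u / (T\<^sup>2 + u) \<le> u / T\<^sup>2" using u tp by (intro divide_left_mono) auto
    also have "\<dots> = 2 * w * \<delta> / (M + 1)"
    proof -
      have m1: "0 < M + 1" using M0 by simp
      have m2: "u + M * u \<noteq> 0" using M0 u by (metis add_pos_nonneg less_irrefl mult_nonneg_nonneg less_imp_le)
      from m1 m2 show ?thesis unfolding T2 using u w delta by (simp add: field_simps)
    qed
    finally have "u / (T\<^sup>2 + u) * M / (2 * w) \<le> 2 * w * \<delta> / (M + 1) * M / (2 * w)"
      using M0 w by (intro divide_right_mono mult_right_mono) auto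
    also have "\<dots> = \<delta> * (M / (M + 1))"
    proof -
      have "0 < w * 2 + M * (w * 2)" using w M0 by (metis add_pos_nonneg mult_nonneg_nonneg less_imp_le mult_pos_pos zero_less_numeral)
      moreover have "0 < M + 1" using M0 by simp
      ultimately show ?thesis using w by (simp add: field_simps)
    qed
    also have "\<dots> \<le> \<delta> * 1" using delta M0 by (intro mult_left_mono) auto
    finally show ?thesis by simp
  qed
  define g where "g j = (if j = 0 then T else \<tau> (block_start b j))" for j
  define blk where "blk i = (THE j. j < J \<and> i \<in> block b j)" for i
  define \<tau>' where "\<tau>' i = (if i < d then g (blk i) else 0)" for i
  have inblk: "i < d" if "j < J" "i \<in> block b j" for i j
  proof -
    have "block_start b (Suc j) \<le> block_start b J" using that by (intro block_start_mono) simp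
    then show ?thesis using that dJ unfolding block_def by auto
  qed
  have blkeq: "blk i = j" if "j < J" "i \<in> block b j" for i j
    unfolding blk_def using that block_unique by (intro the_equality) auto
  have tau'eq: "\<tau>' i = g j" if "j < J" "i \<in> block b j" for i j
    unfolding \<tau>'_def using inblk[OF that] blkeq[OF that] by simp
  have C1: "\<forall>i. 0 \<le> \<tau>' i" unfolding \<tau>'_def g_def using nn Tpos by auto
  have C2: "\<forall>i\<ge>d. \<tau>' i = 0" unfolding \<tau>'_def by simp
  have C3: "\<forall>j<J. \<forall>i\<in>block b j. \<forall>i'\<in>block b j. \<tau>' i = \<tau>' i'" using tau'eq by simp
  define V where "V i = VV u w (AA u (\<tau> i))" for i
  define B where "B i = BB u w (\<theta> i) (AA u (\<tau> i))" for i
  have V0: "0 \<le> V i" for i unfolding V_def using VV_nonneg[OF u w AA_nonneg[OF u]] by simp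
  have B0: "0 \<le> B i" for i unfolding B_def using BB_nonneg[OF u w AA_nonneg[OF u]] by simp
  have rrVB: "rr u w (\<theta> i) (\<tau> i) = V i + B i" for i unfolding V_def B_def by (rule rr_split[OF u w])
  define F where "F j = (\<Sum>i\<in>block b j. rr u w (\<theta> i) (g j))" for j
  define Vb where "Vb j = (\<Sum>i\<in>block b j. V i)" for j
  define Bb where "Bb j = (\<Sum>i\<in>block b j. B i)" for j
  have Vb0: "0 \<le> Vb j" for j unfolding Vb_def using V0 by (simp add: sum_nonneg)
  have Bb0: "0 \<le> Bb j" for j unfolding Bb_def using B0 by (simp add: sum_nonneg)
  have lhs: "(\<Sum>i<d. rr u w (\<theta> i) (\<tau>' i)) = (\<Sum>j<J. F j)"
    unfolding dJ[symmetric] sum_blocks F_def using tau'eq by (intro sum.cong) auto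
  have sumV: "(\<Sum>j<J. Vb j) = (\<Sum>i<d. V i)" unfolding Vb_def dJ[symmetric] sum_blocks ..
  have sumB: "(\<Sum>j<J. Bb j) = (\<Sum>i<d. B i)" unfolding Bb_def dJ[symmetric] sum_blocks ..
  define C where "C = ln ((u + w) / w) / 2"
  have F0: "F 0 \<le> real (b 0) * C + \<delta>"
  proof -
    have "F 0 \<le> (\<Sum>i\<in>block b 0. C + u / (T\<^sup>2 + u) * (\<theta> i)\<^sup>2 / (2 * w))"
      unfolding F_def g_def C_def using rr_large[OF u w] by (intro sum_mono) simp
    also have "\<dots> = real (b 0) * C + u / (T\<^sup>2 + u) / (2 * w) * (\<Sum>i\<in>block b 0. (\<theta> i)\<^sup>2)"
      by (simp add: sum.distrib card_block sum_distrib_left sum_divide_distrib)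
    also have "(\<Sum>i\<in>block b 0. (\<theta> i)\<^sup>2) \<le> M"
      unfolding M_def using inblk[of 0] J' by (intro sum_mono2) auto
    then have "u / (T\<^sup>2 + u) / (2 * w) * (\<Sum>i\<in>block b 0. (\<theta> i)\<^sup>2) \<le> u / (T\<^sup>2 + u) / (2 * w) * M"
      using u w Tpos by (intro mult_left_mono) (auto intro: add_nonneg_pos)
    then have "real (b 0) * C + u / (T\<^sup>2 + u) / (2 * w) * (\<Sum>i\<in>block b 0. (\<theta> i)\<^sup>2) \<le> real (b 0) * C + \<delta>"
      using Tsmall by simp
    finally show ?thesis .
  qed
  have FS: "F (Suc j) \<le> (1 + \<eta>) * Vb j + Bb (Suc j)" if j: "j < J'" for j
  proof -
    let ?c = "\<tau> (block_start b (Suc j))"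
    let ?a = "AA u ?c"
    have sJ: "Suc j < J" using j J' by simp
    have sd: "block_start b (Suc j) < d"
      using inblk[OF sJ, of "block_start b (Suc j)"] bpos[OF sJ] unfolding block_def block_start_Suc by simp
    have a0: "0 \<le> ?a" "?a \<le> 1" using AA_nonneg[OF u] AA_le1[OF u] by auto
    have "F (Suc j) = (\<Sum>i\<in>block b (Suc j). VV u w ?a + BB u w (\<theta> i) ?a)"
      unfolding F_def g_def using rr_split[OF u w] by simp
    also have "\<dots> \<le> (\<Sum>i\<in>block b (Suc j). VV u w ?a + B i)"
    proof (rule sum_mono)
      fix i assume i: "i \<in> block b (Suc j)"
      have id: "i < d" using inblk[OF sJ i] .
      have "block_start b (Suc j) \<le> i" using i unfolding block_def by simp
      then have "\<tau> i \<le> ?c" using mon id by blast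
      then have "AA u (\<tau> i) \<le> ?a" using nn by (intro AA_mono[OF u]) auto
      then show "VV u w ?a + BB u w (\<theta> i) ?a \<le> VV u w ?a + B i"
        unfolding B_def using BB_antimono[OF u w AA_nonneg[OF u] _ a0(2)] by simp
    qed
    also have "\<dots> = real (b (Suc j)) * VV u w ?a + Bb (Suc j)"
      unfolding Bb_def by (simp add: sum.distrib card_block)
    also have "real (b (Suc j)) * VV u w ?a \<le> (1 + \<eta>) * (real (b j) * VV u w ?a)"
    proof -
      have bj: "0 < real (b j)" using bpos[of j] sJ by simp
      have "real (b (Suc j)) \<le> (1 + \<eta>) * real (b j)"
        using ratio sJ bj by (auto simp: divide_le_eq)
      then show ?thesis using VV_nonneg[OF u w a0(1)]
        by (subst mult.assoc[symmetric]) (intro mult_right_mono)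
    qed
    also have "real (b j) * VV u w ?a \<le> Vb j"
    proof -
      have "real (b j) * VV u w ?a = (\<Sum>k\<in>block b j. VV u w ?a)" by (simp add: card_block)
      also have "\<dots> \<le> Vb j" unfolding Vb_def V_def
      proof (rule sum_mono)
        fix k assume k: "k \<in> block b j"
        have "k \<le> block_start b (Suc j)" using k unfolding block_def by simp
        then have "?c \<le> \<tau> k" using mon sd by blast
        then show "VV u w ?a \<le> VV u w (AA u (\<tau> k))"
          using nn by (intro VV_mono[OF u w] AA_mono[OF u] a0(1)) auto
      qed
      finally show ?thesis .
    qed
    then have "(1 + \<eta>) * (real (b j) * VV u w ?a) \<le> (1 + \<eta>) * Vb j" using eta by (intro mult_left_mono) auto
    finally show ?thesis by simp
  qed
  have "(\<Sum>j<J. F j) = F 0 + (\<Sum>j<J'. F (Suc j))" unfolding J' by (rule sum.lessThan_Suc_shift)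
  also have "\<dots> \<le> real (b 0) * C + \<delta> + (\<Sum>j<J'. (1 + \<eta>) * Vb j + Bb (Suc j))"
    using F0 FS by (intro add_mono sum_mono) auto
  also have "(\<Sum>j<J'. (1 + \<eta>) * Vb j + Bb (Suc j)) = (1 + \<eta>) * (\<Sum>j<J'. Vb j) + (\<Sum>j<J'. Bb (Suc j))"
    by (simp add: sum.distrib sum_distrib_left)
  also have "(\<Sum>j<J'. Vb j) \<le> (\<Sum>j<J. Vb j)" unfolding J' using Vb0 by (intro sum_mono2) auto
  also have "(\<Sum>j<J'. Bb (Suc j)) \<le> (\<Sum>j<J. Bb j)" unfolding J' sum.lessThan_Suc_shift using Bb0[of 0] by simp
  finally have "(\<Sum>j<J. F j) \<le> real (b 0) * C + \<delta> + ((1 + \<eta>) * (\<Sum>i<d. V i) + (\<Sum>i<d. B i))"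
    unfolding sumV sumB using eta by (simp add: mult_left_mono)
  also have "\<dots> \<le> real (b 0) * C + \<delta> + (1 + \<eta>) * (\<Sum>i<d. rr u w (\<theta> i) (\<tau> i))"
  proof -
    have sB: "0 \<le> (\<Sum>i<d. B i)" using B0 by (simp add: sum_nonneg)
    have "(\<Sum>i<d. B i) \<le> (1 + \<eta>) * (\<Sum>i<d. B i)"
      using mult_nonneg_nonneg[of \<eta> "\<Sum>i<d. B i"] eta sB by (simp add: distrib_right)
    then show ?thesis unfolding rrVB sum.distrib by (simp add: distrib_left)
  qed
  finally have fin: "(\<Sum>j<J. F j) \<le> real (b 0) * C + \<delta> + (1 + \<eta>) * (\<Sum>i<d. rr u w (\<theta> i) (\<tau> i))" .
  have "(\<Sum>i<d. rr u w (\<theta> i) (\<tau>' i)) \<le> (1 + \<eta>) * (\<Sum>i<d. rr u w (\<theta> i) (\<tau> i)) + real (b 0) * C + \<delta>"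
    using fin unfolding lhs by linarith
  then show ?thesis unfolding C_def using C1 C2 C3 by blast
qed



lemma rr_nonneg: assumes u: "0 < u" and w: "0 < w" shows "0 \<le> rr u w th t"
proof -
  have "0 \<le> VV u w (AA u t)" by (rule VV_nonneg[OF u w AA_nonneg[OF u]])
  moreover have "0 \<le> BB u w th (AA u t)" by (rule BB_nonneg[OF u w AA_nonneg[OF u]])
  ultimately show ?thesis by (simp add: rr_split[OF u w])
qed

lemma lemma4p3:
  fixes d J :: nat and b :: "nat \<Rightarrow> nat" and \<eta> eps eps' :: real and \<theta> :: "nat \<Rightarrow> real"
  assumes "0 < d" and "consecutive_partition d b J"
    and "\<forall>j. Suc j < J \<longrightarrow> real (b (Suc j)) / real (b j) \<le> 1 + \<eta>"
    and "0 < \<eta>"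
    and "summable (\<lambda>i. (\<theta> i)\<^sup>2)"
    and "0 < eps" and "0 < eps'"
  shows "(INF Q\<in>G_BW eps eps' d b J. risk eps eps' \<theta> Q)
           \<le> ennreal (1 + \<eta>) * (INF Q\<in>G_mon eps eps' d. risk eps eps' \<theta> Q)
             + ennreal (real (b 0) / 2 * ln (eps\<^sup>2 / v2 eps eps'))"
proof -
  note dpos = assms(1) and cp = assms(2) and ratio = assms(3) and eta = assms(4)
    and eps = assms(6) and eps' = assms(7)
  define u where "u = eps\<^sup>2"
  define w where "w = eps'\<^sup>2"
  have u: "0 < u" unfolding u_def using eps by simp
  have w: "0 < w" unfolding w_def using eps' by simp
  define C where "C = ln ((u + w) / w) / 2"
  have C0: "0 \<le> C" unfolding C_def using u w by simp
  have Ceq: "real (b 0) / 2 * ln (eps\<^sup>2 / v2 eps eps') = real (b 0) * C"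
  proof -
    have "eps\<^sup>2 / v2 eps eps' = (u + w) / w"
      unfolding v2_def u_def w_def using eps eps' by (simp add: field_simps)
    then show ?thesis unfolding C_def by simp
  qed
  define LHS where "LHS = (INF Q\<in>G_BW eps eps' d b J. risk eps eps' \<theta> Q)"
  define X where "X = (INF Q\<in>G_mon eps eps' d. risk eps eps' \<theta> Q)"
  define K where "K = Ktail (eps'\<^sup>2) \<theta> d"
  have step1: "LHS \<le> ennreal (1 + \<eta>) * risk eps eps' \<theta> Qm + ennreal (real (b 0) * C) + ennreal \<delta>"
    if Qm: "Qm \<in> G_mon eps eps' d" and delta: "0 < \<delta>" for Qm \<delta>
  proof -
    obtain \<tau> where Qm: "Qm = pred_G eps eps' \<tau>" and nn: "\<forall>i. 0 \<le> \<tau> i" and tl: "\<forall>i\<ge>d. \<tau> i = 0"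
      and mon: "\<forall>i j. i \<le> j \<and> j < d \<longrightarrow> \<tau> j \<le> \<tau> i"
      using Qm unfolding G_mon_def by blast
    obtain \<tau>' where nn': "\<forall>i. 0 \<le> \<tau>' i" and tl': "\<forall>i\<ge>d. \<tau>' i = 0"
      and bl': "\<forall>j<J. \<forall>i\<in>block b j. \<forall>i'\<in>block b j. \<tau>' i = \<tau>' i'"
      and ineq: "(\<Sum>i<d. rr u w (\<theta> i) (\<tau>' i)) \<le> (1 + \<eta>) * (\<Sum>i<d. rr u w (\<theta> i) (\<tau> i)) + real (b 0) * C + \<delta>"
      using block_ineq[OF u w eta dpos cp ratio mon nn delta, of \<theta>] unfolding C_def by blast
    have mem: "pred_G eps eps' \<tau>' \<in> G_BW eps eps' d b J"
      unfolding G_BW_def using nn' tl' bl' by blast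
    define S where "S = (\<Sum>i<d. rr u w (\<theta> i) (\<tau> i))"
    define S' where "S' = (\<Sum>i<d. rr u w (\<theta> i) (\<tau>' i))"
    have S0: "0 \<le> S" unfolding S_def using rr_nonneg[OF u w] by (simp add: sum_nonneg)
    have S'0: "0 \<le> S'" unfolding S'_def using rr_nonneg[OF u w] by (simp add: sum_nonneg)
    have R: "risk eps eps' \<theta> (pred_G eps eps' \<tau>) = ennreal S + K"
      unfolding risk_formula[OF eps eps' tl] S_def K_def u_def w_def
      using rr_nonneg[OF u w] u_def w_def by (subst sum_ennreal) auto
    have R': "risk eps eps' \<theta> (pred_G eps eps' \<tau>') = ennreal S' + K"
      unfolding risk_formula[OF eps eps' tl'] S'_def K_def u_def w_def
      using rr_nonneg[OF u w] u_def w_def by (subst sum_ennreal) auto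
    have "LHS \<le> risk eps eps' \<theta> (pred_G eps eps' \<tau>')"
      unfolding LHS_def using mem by (rule INF_lower)
    also have "\<dots> = ennreal S' + K" by (rule R')
    also have "ennreal S' \<le> ennreal ((1 + \<eta>) * S + real (b 0) * C + \<delta>)"
      using ineq unfolding S_def S'_def by (rule ennreal_leI)
    also have "ennreal ((1 + \<eta>) * S + real (b 0) * C + \<delta>) =
        ennreal (1 + \<eta>) * ennreal S + ennreal (real (b 0) * C) + ennreal \<delta>"
      using eta S0 C0 delta by (simp add: ennreal_plus ennreal_mult)
    also have "K \<le> ennreal (1 + \<eta>) * K"
    proof -
      have "1 * K \<le> ennreal (1 + \<eta>) * K" using eta by (intro mult_right_mono) (auto simp: ennreal_ge_1)
      then show ?thesis by simp
    qed
    finally have "LHS \<le> ennreal (1 + \<eta>) * ennreal S + ennreal (real (b 0) * C) + ennreal \<delta> + ennreal (1 + \<eta>) * K"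
      by simp
    also have "\<dots> = ennreal (1 + \<eta>) * (ennreal S + K) + ennreal (real (b 0) * C) + ennreal \<delta>"
      by (simp add: distrib_left ac_simps)
    finally show ?thesis unfolding Qm R .
  qed
  have "LHS \<le> ennreal (1 + \<eta>) * X + ennreal (real (b 0) * C)"
  proof (rule ennreal_le_epsilon)
    fix e :: real assume top: "ennreal (1 + \<eta>) * X + ennreal (real (b 0) * C) < top" and e: "0 < e"
    have Xtop: "X \<noteq> \<infinity>"
    proof
      assume "X = \<infinity>"
      then have "ennreal (1 + \<eta>) * X = \<infinity>" using eta by (simp add: ennreal_mult_top)
      then show False using top by simp
    qed
    define e1 where "e1 = e / (2 * (1 + \<eta>))"
    have e1: "0 < e1" unfolding e1_def using e eta by simp
    obtain Qm where Qm: "Qm \<in> G_mon eps eps' d" and lt: "risk eps eps' \<theta> Qm < X + ennreal e1"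
      using INF_approx_ennreal[OF e1 X_def Xtop] by blast
    have "LHS \<le> ennreal (1 + \<eta>) * risk eps eps' \<theta> Qm + ennreal (real (b 0) * C) + ennreal (e / 2)"
      using step1[OF Qm] e by simp
    also have "ennreal (1 + \<eta>) * risk eps eps' \<theta> Qm \<le> ennreal (1 + \<eta>) * (X + ennreal e1)"
      using lt by (intro mult_left_mono) auto
    also have "ennreal (1 + \<eta>) * (X + ennreal e1) = ennreal (1 + \<eta>) * X + ennreal (e / 2)"
    proof -
      have "ennreal (1 + \<eta>) * ennreal e1 = ennreal ((1 + \<eta>) * e1)" using eta e1 by (simp add: ennreal_mult)
      also have "(1 + \<eta>) * e1 = e / 2" unfolding e1_def using eta by (simp add: field_simps)
      finally show ?thesis by (simp add: distrib_left)
    qed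
    finally have "LHS \<le> ennreal (1 + \<eta>) * X + ennreal (e / 2) + ennreal (real (b 0) * C) + ennreal (e / 2)"
      by (simp add: ac_simps)
    also have "\<dots> = ennreal (1 + \<eta>) * X + ennreal (real (b 0) * C) + ennreal e"
      using e by (simp add: ac_simps ennreal_plus[symmetric])
    finally show "LHS \<le> ennreal (1 + \<eta>) * X + ennreal (real (b 0) * C) + ennreal e" .
  qed
  then show ?thesis unfolding LHS_def X_def Ceq .
qed


end
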